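(* Let $a,b\in\mathbb{C}$ with $a\ne b$, let $m\ge n\ge 1$ be integers, and let $f(z)=(z-a)^m(z-b)^n$. Let $S_f$ be the rational map $$S_f(z)=z-\frac{f(z)f'(z)}{f'(z)^2-f(z)f''(z)}$$ (Schröder's method applied to $f$), and let $J_{m,n,a,b}$ denote its Julia set. Then: (1) If $m=n$, then $J_{m,m,a,b}$ is the line of points equidistant from $a$ and $b$. (2) If $m>n\ge 1$, then $J_{m,n,a,b}$ is the circle $$J_{m,n,a,b}=\left\{z\in\mathbb{C}: \left|z-\frac{b m^2-a n^2}{m^2-n^2}\right|=\frac{mn |a-b|}{m^2-n^2}\right\}.$$
   Context: $S_f$ is regarded as a rational map of the Riemann sphere (after cancelling common factors). The Julia set of a rational map is the standard one from complex dynamics (the complement of the set of points where the family of iterates is normal). *)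

theory Defs
  imports "HOL-Analysis.Analysis" "HOL-Computational_Algebra.Polynomial_Factorial" "HOL-Computational_Algebra.Field_as_Ring"
begin

text \<open>The Riemann sphere is modelled as complex option: Some z is the finite point z,
  None is the point at infinity.\<close>

definition chordal :: "complex option \<Rightarrow> complex option \<Rightarrow> real" where
  "chordal z w = (case (z, w) of
      (Some x, Some y) \<Rightarrow> 2 * cmod (x - y) / sqrt ((1 + (cmod x)^2) * (1 + (cmod y)^2))
    | (Some x, None) \<Rightarrow> 2 / sqrt (1 + (cmod x)^2)
    | (None, Some y) \<Rightarrow> 2 / sqrt (1 + (cmod y)^2)
    | (None, None) \<Rightarrow> 0)"

text \<open>Evaluation of p/q on the sphere (meaningful for coprime p, q).\<close>
definition rat_eval :: "complex poly \<Rightarrow> complex poly \<Rightarrow> complex option \<Rightarrow> complex option" where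
  "rat_eval p q z = (case z of
      Some x \<Rightarrow> (if poly q x = 0 then None else Some (poly p x / poly q x))
    | None \<Rightarrow> (if degree p > degree q then None
               else if degree p = degree q then Some (lead_coeff p / lead_coeff q)
               else Some 0))"

definition rational_map :: "complex poly \<Rightarrow> complex poly \<Rightarrow> complex option \<Rightarrow> complex option" where
  "rational_map p q = (let g = gcd p q in rat_eval (p div g) (q div g))"

definition schroeder_map :: "complex poly \<Rightarrow> complex option \<Rightarrow> complex option" where
  "schroeder_map f =
     (let Q = (pderiv f)^2 - f * pderiv (pderiv f);
          P = [:0, 1:] * Q - f * pderiv f
      in rational_map P Q)"

definition normal_at :: "(complex option \<Rightarrow> complex option) \<Rightarrow> complex option \<Rightarrow> bool" where
  "normal_at R z \<longleftrightarrow> (\<exists>r>0. \<forall>k :: nat \<Rightarrow> nat. \<exists>s g. strict_mono s \<and>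
      (\<forall>e>0. \<exists>N::nat. \<forall>j\<ge>N. \<forall>w. chordal z w < r \<longrightarrow> chordal ((R ^^ k (s j)) w) (g w) < e))"

definition julia_set :: "(complex option \<Rightarrow> complex option) \<Rightarrow> complex option set" where
  "julia_set R = {z. \<not> normal_at R z}"

end

theory Submission
  imports Defs
begin

lemma chordal_sq_SS: "(chordal (Some x) (Some y))^2 = 4 * (cmod (x-y))^2 / ((1 + (cmod x)^2) * (1 + (cmod y)^2))"
  by (simp add: chordal_def power_divide power_mult_distrib)

lemma chordal_sq_SN: "(chordal (Some x) None)^2 = 4 / (1 + (cmod x)^2)"
  by (simp add: chordal_def power_divide)
lemma chordal_sq_NS: "(chordal None (Some x))^2 = 4 / (1 + (cmod x)^2)"
  by (simp add: chordal_def power_divide)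
lemma chordal_NN: "chordal None None = 0"
  by (simp add: chordal_def)

lemma one_plus_sq_pos[simp]: "1 + (cmod a)^2 > 0"
  by (simp add: add_pos_nonneg)
lemma one_plus_sq_nz[simp]: "1 + (cmod a)^2 \<noteq> 0"
  using one_plus_sq_pos[of a] by linarith
lemma one_plus_sq_nz2[simp]: "(cmod a)^2 + 1 \<noteq> 0"
  using one_plus_sq_pos[of a] by linarith

lemma chordal_nonneg: "chordal z w \<ge> 0"
  by (auto simp: chordal_def split: option.splits)

definition stereo :: "complex option \<Rightarrow> complex \<times> real" where
  "stereo z = (case z of None \<Rightarrow> (0, 1)
     | Some x \<Rightarrow> (complex_of_real (2 / (1 + (cmod x)^2)) * x, ((cmod x)^2 - 1) / (1 + (cmod x)^2)))"

lemma cmod_sq_re_im: "(cmod x)^2 = (Re x)^2 + (Im x)^2"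
  by (simp add: cmod_def)

lemma st_id1:
  fixes x1 x2 y1 y2 X Y :: real
  assumes "X = x1^2 + x2^2" "Y = y1^2+y2^2"
  shows "(2 * x1 / (1 + X) - 2 * y1 / (1 + Y))\<^sup>2 +
        (2 * x2 / (1 + X) - 2 * y2 / (1 + Y))\<^sup>2 +
        ((X - 1) / (1 + X) - (Y - 1) / (1 + Y))\<^sup>2 =
        (4 * (x1 - y1)\<^sup>2 + 4 * (x2 - y2)\<^sup>2) / ((1 + X) * (1 + Y))"
proof -
  have X0: "1 + X > 0" "1 + Y > 0" using assms by (simp_all add: add_pos_nonneg)
  show ?thesis using X0
    apply (simp add: divide_simps)
    apply (simp add: assms power2_eq_square)
    by algebra
qed
lemma st_id2:
  fixes x1 x2 X :: real
  assumes "X = x1^2 + x2^2"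
  shows "(2 * x1 / (1 + X))\<^sup>2 + (2 * x2 / (1 + X))\<^sup>2 + ((X - 1) / (1 + X) - 1)\<^sup>2 = 4 / (1 + X)"
    and "(2 * x1 / (1 + X))\<^sup>2 + (2 * x2 / (1 + X))\<^sup>2 + (1 - (X - 1) / (1 + X))\<^sup>2 = 4 / (1 + X)"
proof -
  have X0: "1 + X > 0" using assms by (simp_all add: add_pos_nonneg)
  show "(2 * x1 / (1 + X))\<^sup>2 + (2 * x2 / (1 + X))\<^sup>2 + ((X - 1) / (1 + X) - 1)\<^sup>2 = 4 / (1 + X)" using X0
    by (simp add: divide_simps; (simp add: assms power2_eq_square algebra_simps)?)
  show "(2 * x1 / (1 + X))\<^sup>2 + (2 * x2 / (1 + X))\<^sup>2 + (1 - (X - 1) / (1 + X))\<^sup>2 = 4 / (1 + X)" using X0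
    by (simp add: divide_simps; (simp add: assms power2_eq_square algebra_simps)?)
qed

lemma dist_pair_sq: "(dist ((u::complex), (s::real)) (v, t))^2 = (Re u - Re v)^2 + (Im u - Im v)^2 + (s - t)^2"
  by (simp add: dist_norm norm_Pair cmod_sq_re_im)

lemma dist_stereo_sq: "(dist (stereo z) (stereo w))^2 = (chordal z w)^2"
proof (cases z; cases w)
  fix x y assume zw: "z = Some x" "w = Some y"
  define X where "X = (Re x)^2 + (Im x)^2"
  define Y where "Y = (Re y)^2 + (Im y)^2"
  have X0: "1 + X > 0" "1 + Y > 0" unfolding X_def Y_def by (simp_all add: add_pos_nonneg)
  show ?thesis using X0 unfolding zw chordal_sq_SS
    by (simp add: stereo_def dist_pair_sq cmod_sq_re_im flip: X_def Y_def)
       (rule st_id1; simp add: X_def Y_def)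
next
  fix x assume zw: "z = Some x" "w = None"
  define X where "X = (Re x)^2 + (Im x)^2"
  have X0: "1 + X > 0" unfolding X_def by (simp add: add_pos_nonneg)
  show ?thesis using X0 unfolding zw chordal_sq_SN
    by (simp add: stereo_def dist_pair_sq cmod_sq_re_im flip: X_def)
       (simp add: st_id2 X_def)
next
  fix x assume zw: "z = None" "w = Some x"
  define X where "X = (Re x)^2 + (Im x)^2"
  have X0: "1 + X > 0" unfolding X_def by (simp add: add_pos_nonneg)
  show ?thesis using X0 unfolding zw chordal_sq_NS
    by (simp add: stereo_def dist_pair_sq cmod_sq_re_im flip: X_def)
       (simp add: st_id2 X_def)
qed (simp add: chordal_NN stereo_def)

lemma chordal_dist: "chordal z w = dist (stereo z) (stereo w)"
  using dist_stereo_sq[of z w] chordal_nonneg[of z w]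
  by (metis power2_eq_imp_eq zero_le_dist)

lemma chordal_sym: "chordal z w = chordal w z"
  by (simp add: chordal_dist dist_commute)
lemma chordal_triangle: "chordal z w \<le> chordal z u + chordal u w"
  by (simp add: chordal_dist dist_triangle)
lemma chordal_refl[simp]: "chordal z z = 0"
  by (simp add: chordal_dist)


definition clip :: "(complex option \<Rightarrow> complex option) \<Rightarrow> bool" where
  "clip \<phi> \<longleftrightarrow> (\<exists>K>0. \<forall>z w. chordal (\<phi> z) (\<phi> w) \<le> K * chordal z w)"

lemma clip_comp: "clip f \<Longrightarrow> clip g \<Longrightarrow> clip (f \<circ> g)"
  unfolding clip_def
proof (elim exE conjE)
  fix K1 K2 assume K1: "K1 > 0" "\<forall>z w. chordal (f z) (f w) \<le> K1 * chordal z w"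
    and K2: "K2 > 0" "\<forall>z w. chordal (g z) (g w) \<le> K2 * chordal z w"
  show "\<exists>K>0. \<forall>z w. chordal ((f \<circ> g) z) ((f \<circ> g) w) \<le> K * chordal z w"
  proof (intro exI[of _ "K1*K2"] conjI allI)
    fix z w
    have "chordal ((f \<circ> g) z) ((f \<circ> g) w) \<le> K1 * chordal (g z) (g w)" using K1 by simp
    also have "\<dots> \<le> K1 * (K2 * chordal z w)" using K1 K2 by (simp add: mult_left_mono)
    finally show "chordal ((f \<circ> g) z) ((f \<circ> g) w) \<le> K1 * K2 * chordal z w" by (simp add: mult.assoc)
  qed (use K1 K2 in simp)
qed

lemma chordal_le_from_sq:
  assumes "K \<ge> 0" "(chordal a b)^2 \<le> K^2 * (chordal c d)^2"
  shows "chordal a b \<le> K * chordal c d"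
proof (rule power2_le_imp_le)
  show "(chordal a b)^2 \<le> (K * chordal c d)^2" using assms by (simp add: power_mult_distrib)
  show "0 \<le> K * chordal c d" using assms chordal_nonneg by simp
qed

lemma lift_clip:
  fixes f :: "complex \<Rightarrow> complex"
  assumes C: "C \<ge> 1" and L: "L \<ge> 0"
    and grow: "\<And>x. 1 + (cmod x)^2 \<le> C * (1 + (cmod (f x))^2)"
    and lip: "\<And>x y. cmod (f x - f y) \<le> L * cmod (x - y)"
  shows "clip (map_option f)"
  unfolding clip_def
proof (intro exI[of _ "max 1 L * C"] conjI allI)
  define K where "K = max 1 L * C"
  have K1: "K \<ge> C" unfolding K_def using C by (simp add: mult_le_cancel_right1)
  have KL: "K \<ge> L * C" unfolding K_def using C by (simp add: mult_right_mono)
  have "C * 1 \<le> K * K" using K1 C by (intro mult_mono) auto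
  then have KC2: "K^2 \<ge> C" by (simp add: power2_eq_square)
  show "max 1 L * C > 0" using C by simp
  fix z w
  show "chordal (map_option f z) (map_option f w) \<le> max 1 L * C * chordal z w"
    unfolding K_def[symmetric]
  proof (rule chordal_le_from_sq)
    show "K \<ge> 0" using K1 C by simp
    show "(chordal (map_option f z) (map_option f w))\<^sup>2 \<le> K\<^sup>2 * (chordal z w)\<^sup>2"
    proof (cases z; cases w)
      fix x y assume zw: "z = Some x" "w = Some y"
      define X where "X = 1 + (cmod x)^2"
      define Y where "Y = 1 + (cmod y)^2"
      define FX where "FX = 1 + (cmod (f x))^2"
      define FY where "FY = 1 + (cmod (f y))^2"
      have pos: "X > 0" "Y > 0" "FX > 0" "FY > 0" unfolding X_def Y_def FX_def FY_def
        by (simp_all add: add_pos_nonneg)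
      have g1: "X \<le> C * FX" "Y \<le> C * FY" using grow unfolding X_def Y_def FX_def FY_def by auto
      have XY: "X * Y \<le> (C * FX) * (C * FY)" using g1 pos by (intro mult_mono) auto
      have l2: "(cmod (f x - f y))^2 \<le> L^2 * (cmod (x - y))^2"
        using lip[of x y] by (metis norm_ge_zero power_mono power_mult_distrib)
      have "4 * (cmod (f x - f y))^2 * (X * Y) \<le> 4 * (L^2 * (cmod (x - y))^2) * ((C * FX) * (C * FY))"
        using l2 XY pos by (intro mult_mono[of "4 * (cmod (f x - f y))^2"]) auto
      also have "\<dots> = 4 * (cmod (x - y))^2 * (L * C)^2 * (FX * FY)" by (simp add: algebra_simps power2_eq_square)
      also have "\<dots> \<le> 4 * (cmod (x - y))^2 * K^2 * (FX * FY)"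
        using KL pos C L by (intro mult_mono mult_left_mono power_mono) auto
      finally have "4 * (cmod (f x - f y))^2 * (X * Y) \<le> K^2 * (4 * (cmod (x - y))^2) * (FX * FY)"
        by (simp add: algebra_simps)
      then show ?thesis unfolding zw using pos
        by (simp add: chordal_sq_SS X_def[symmetric] Y_def[symmetric] FX_def[symmetric] FY_def[symmetric]
            divide_simps)
    next
      fix x assume zw: "z = Some x" "w = None"
      define X where "X = 1 + (cmod x)^2"
      define FX where "FX = 1 + (cmod (f x))^2"
      have pos: "X > 0" "FX > 0" unfolding X_def FX_def by (simp_all add: add_pos_nonneg)
      have "X \<le> C * FX" using grow unfolding X_def FX_def by auto
      also have "\<dots> \<le> K^2 * FX" using KC2 pos by (simp add: mult_right_mono)
      finally have "4 * X \<le> K^2 * 4 * FX" by simp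
      then show ?thesis unfolding zw using pos
        by (simp add: chordal_sq_SN X_def[symmetric] FX_def[symmetric] divide_simps)
    next
      fix x assume zw: "z = None" "w = Some x"
      define X where "X = 1 + (cmod x)^2"
      define FX where "FX = 1 + (cmod (f x))^2"
      have pos: "X > 0" "FX > 0" unfolding X_def FX_def by (simp_all add: add_pos_nonneg)
      have "X \<le> C * FX" using grow unfolding X_def FX_def by auto
      also have "\<dots> \<le> K^2 * FX" using KC2 pos by (simp add: mult_right_mono)
      finally have "4 * X \<le> K^2 * 4 * FX" by simp
      then show ?thesis unfolding zw using pos
        by (simp add: chordal_sq_NS X_def[symmetric] FX_def[symmetric] divide_simps)
    qed (simp add: chordal_NN)
  qed
qed

lemma clip_tr: "clip (map_option (\<lambda>x. x + t))"
proof (rule lift_clip[where C = "2 + 2 * (cmod t)^2" and L = 1])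
  fix x :: complex
  have "cmod x \<le> cmod (x + t) + cmod t" by (metis add_diff_cancel norm_triangle_ineq4)
  then have "(cmod x)^2 \<le> (cmod (x + t) + cmod t)^2" by (simp add: power_mono)
  also have "\<dots> \<le> 2 * (cmod (x + t))^2 + 2 * (cmod t)^2"
  proof -
    have "0 \<le> (cmod (x + t) - cmod t)^2" by simp
    then show ?thesis unfolding power2_sum power2_diff by linarith
  qed
  finally have a: "(cmod x)^2 \<le> 2 * (cmod (x + t))^2 + 2 * (cmod t)^2" .
  have b: "0 \<le> (cmod t)^2 * (cmod (x + t))^2" by simp
  have e: "(2 + 2 * (cmod t)^2) * (1 + (cmod (x + t))^2) = 2 + 2*(cmod (x+t))^2 + 2*(cmod t)^2 + 2*((cmod t)^2 * (cmod (x + t))^2)"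
    by (simp add: algebra_simps)
  show "1 + (cmod x)^2 \<le> (2 + 2 * (cmod t)^2) * (1 + (cmod (x + t))^2)"
    using a b e by linarith
qed auto

lemma clip_sc:
  assumes "c \<noteq> 0"
  shows "clip (map_option (\<lambda>x. c * x))"
proof (rule lift_clip[where C = "1 + 1 / (cmod c)^2" and L = "cmod c"])
  fix x :: complex
  have c0: "cmod c > 0" using assms by simp
  have "(1 + 1 / (cmod c)^2) * (1 + (cmod (c * x))^2) = 1 + (cmod c)^2 * (cmod x)^2 + 1 / (cmod c)^2 + (cmod x)^2"
    using c0 by (simp add: norm_mult power_mult_distrib field_simps)
  moreover have "0 \<le> (cmod c)^2 * (cmod x)^2 + 1 / (cmod c)^2" by simp
  ultimately show "1 + (cmod x)^2 \<le> (1 + 1 / (cmod c)^2) * (1 + (cmod (c * x))^2)" by linarith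
  fix x y :: complex
  show "cmod (c * x - c * y) \<le> cmod c * cmod (x - y)"
    by (simp add: norm_mult flip: right_diff_distrib)
qed auto

definition inv_s :: "complex option \<Rightarrow> complex option" where
  "inv_s z = (case z of None \<Rightarrow> Some 0 | Some x \<Rightarrow> if x = 0 then None else Some (1 / x))"

lemma inv_s_inv[simp]: "inv_s (inv_s z) = z"
  by (auto simp: inv_s_def split: option.splits)

lemma inv_s_iso: "chordal (inv_s z) (inv_s w) = chordal z w"
proof -
  have "(chordal (inv_s z) (inv_s w))^2 = (chordal z w)^2"
  proof (cases z; cases w)
    fix x y assume zw: "z = Some x" "w = Some y"
    show ?thesis
    proof (cases "x = 0"; cases "y = 0")
      assume "x \<noteq> 0" "y \<noteq> 0"
      then show ?thesis unfolding zw
        by (simp add: inv_s_def chordal_sq_SS norm_divide power_divide divide_simps)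
           (simp add: norm_minus_commute algebra_simps flip: norm_mult power_mult_distrib)
    qed (auto simp: zw inv_s_def chordal_sq_SS chordal_sq_SN chordal_sq_NS power_divide norm_divide divide_simps)
  qed (auto simp: inv_s_def chordal_sq_SS chordal_sq_SN chordal_sq_NS chordal_NN power_divide norm_divide divide_simps)
  then show ?thesis by (rule power2_eq_imp_eq[OF _ chordal_nonneg chordal_nonneg])
qed

lemma clip_inv_s: "clip inv_s"
  unfolding clip_def by (rule exI[of _ 1]) (simp add: inv_s_iso)

lemma conj_iter:
  assumes "\<And>x. \<psi> (\<phi> x) = x" "\<And>y. \<phi> (\<psi> y) = y" "\<And>z. S z = \<psi> (T (\<phi> z))"
  shows "(S ^^ k) z = \<psi> ((T ^^ k) (\<phi> z))"
proof (induction k arbitrary: z)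
  case 0 then show ?case using assms by simp
next
  case (Suc k)
  have "(S ^^ Suc k) z = (S ^^ k) (S z)" by (simp add: funpow_Suc_right del: funpow.simps)
  also have "\<dots> = \<psi> ((T ^^ k) (\<phi> (S z)))" by (rule Suc)
  also have "\<phi> (S z) = T (\<phi> z)" using assms by simp
  also have "(T ^^ k) (T (\<phi> z)) = (T ^^ Suc k) (\<phi> z)" by (simp add: funpow_Suc_right del: funpow.simps)
  finally show ?case .
qed

lemma conj_normal:
  assumes "clip \<phi>" "clip \<psi>" "\<And>x. \<psi> (\<phi> x) = x" "\<And>y. \<phi> (\<psi> y) = y"
    and SE: "\<And>z. S z = \<psi> (T (\<phi> z))" and nT: "normal_at T (\<phi> z)"
  shows "normal_at S z"
proof -
  obtain Kf where Kf: "Kf > 0" "\<And>z w. chordal (\<phi> z) (\<phi> w) \<le> Kf * chordal z w"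
    using assms(1) unfolding clip_def by blast
  obtain Kp where Kp: "Kp > 0" "\<And>z w. chordal (\<psi> z) (\<psi> w) \<le> Kp * chordal z w"
    using assms(2) unfolding clip_def by blast
  obtain r where r: "r > 0" and H: "\<forall>k :: nat \<Rightarrow> nat. \<exists>s g. strict_mono s \<and>
      (\<forall>e>0. \<exists>N::nat. \<forall>j\<ge>N. \<forall>w. chordal (\<phi> z) w < r \<longrightarrow> chordal ((T ^^ k (s j)) w) (g w) < e)"
    using nT unfolding normal_at_def by blast
  show ?thesis unfolding normal_at_def
  proof (intro exI[of _ "r / Kf"] conjI allI)
    show "r / Kf > 0" using r Kf by simp
    fix k :: "nat \<Rightarrow> nat"
    obtain s g where s: "strict_mono s" and G: "\<forall>e>0. \<exists>N::nat. \<forall>j\<ge>N. \<forall>w. chordal (\<phi> z) w < r \<longrightarrow> chordal ((T ^^ k (s j)) w) (g w) < e"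
      using H by blast
    show "\<exists>(s::nat\<Rightarrow>nat) g. strict_mono s \<and> (\<forall>e>0. \<exists>N::nat. \<forall>j\<ge>N. \<forall>w. chordal z w < r / Kf \<longrightarrow> chordal ((S ^^ k (s j)) w) (g w) < e)"
    proof (intro exI[of _ s] exI[of _ "\<lambda>w. \<psi> (g (\<phi> w))"] conjI allI impI)
      fix e :: real assume e: "e > 0"
      then obtain N where N: "\<forall>j\<ge>N. \<forall>w. chordal (\<phi> z) w < r \<longrightarrow> chordal ((T ^^ k (s j)) w) (g w) < e / Kp"
        using G Kp by (meson divide_pos_pos)
      show "\<exists>N::nat. \<forall>j\<ge>N. \<forall>w. chordal z w < r / Kf \<longrightarrow> chordal ((S ^^ k (s j)) w) (\<psi> (g (\<phi> w))) < e"
      proof (intro exI[of _ N] allI impI)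
        fix j w assume j: "j \<ge> N" and w: "chordal z w < r / Kf"
        have "chordal (\<phi> z) (\<phi> w) \<le> Kf * chordal z w" by (rule Kf(2))
        also have "\<dots> < Kf * (r / Kf)" by (rule mult_strict_left_mono[OF w Kf(1)])
        also have "\<dots> = r" using Kf by simp
        finally have c: "chordal ((T ^^ k (s j)) (\<phi> w)) (g (\<phi> w)) < e / Kp" using N j by blast
        have "chordal ((S ^^ k (s j)) w) (\<psi> (g (\<phi> w))) = chordal (\<psi> ((T ^^ k (s j)) (\<phi> w))) (\<psi> (g (\<phi> w)))"
          using conj_iter[where \<psi>=\<psi> and \<phi>=\<phi> and S=S and T=T, OF assms(3,4) SE] by simp
        also have "\<dots> \<le> Kp * chordal ((T ^^ k (s j)) (\<phi> w)) (g (\<phi> w))" by (rule Kp(2))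
        also have "\<dots> < Kp * (e / Kp)" by (rule mult_strict_left_mono[OF c Kp(1)])
        also have "\<dots> = e" using Kp by simp
        finally show "chordal ((S ^^ k (s j)) w) (\<psi> (g (\<phi> w))) < e" .
      qed
    qed (rule s)
  qed
qed

lemma normal_crit:
  assumes r: "r > 0"
    and C: "\<And>e. e > 0 \<Longrightarrow> \<exists>K. \<forall>k\<ge>K. \<forall>w. chordal z w < r \<longrightarrow> chordal ((R ^^ k) w) (g w) < e"
  shows "normal_at R z"
  unfolding normal_at_def
proof (intro exI[of _ r] conjI allI)
  show "r > 0" by (rule r)
  fix k :: "nat \<Rightarrow> nat"
  show "\<exists>(s::nat\<Rightarrow>nat) g. strict_mono s \<and> (\<forall>e>0. \<exists>N::nat. \<forall>j\<ge>N. \<forall>w. chordal z w < r \<longrightarrow> chordal ((R ^^ k (s j)) w) (g w) < e)"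
  proof (cases "\<exists>c. infinite {i. k i = c}")
    case True
    then obtain c where c: "infinite {i. k i = c}" by blast
    define s where "s = enumerate {i. k i = c}"
    have ks: "\<And>j. k (s j) = c" using enumerate_in_set[OF c] unfolding s_def by auto
    show ?thesis
    proof (intro exI[of _ s] exI[of _ "R ^^ c"] conjI allI impI)
      show "strict_mono s" unfolding s_def by (rule strict_mono_enumerate[OF c])
      fix e :: real assume "e > 0"
      then show "\<exists>N::nat. \<forall>j\<ge>N. \<forall>w. chordal z w < r \<longrightarrow> chordal ((R ^^ k (s j)) w) ((R ^^ c) w) < e"
        using ks by simp
    qed
  next
    case False
    then have fin: "\<And>c. finite {i. k i = c}" by blast
    show ?thesis
    proof (intro exI[of _ "id :: nat \<Rightarrow> nat"] exI[of _ g] conjI allI impI)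
      show "strict_mono (id :: nat \<Rightarrow> nat)" by (simp add: strict_mono_def)
      fix e :: real assume "e > 0"
      then obtain K where K: "\<forall>k\<ge>K. \<forall>w. chordal z w < r \<longrightarrow> chordal ((R ^^ k) w) (g w) < e"
        using C by blast
      have "{i. k i < K} = (\<Union>c<K. {i. k i = c})" by auto
      then have "finite {i. k i < K}" using fin by simp
      then obtain N where N: "{i. k i < K} \<subseteq> {..<N}" using finite_nat_bounded by blast
      have "\<forall>j\<ge>N. k j \<ge> K"
      proof (intro allI impI)
        fix j assume "j \<ge> N"
        then have "j \<notin> {i. k i < K}" using N by auto
        then show "k j \<ge> K" by simp
      qed
      then show "\<exists>N::nat. \<forall>j\<ge>N. \<forall>w. chordal z w < r \<longrightarrow> chordal ((R ^^ k (id j)) w) (g w) < e"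
        using K by auto
    qed
  qed
qed

definition sq :: "complex option \<Rightarrow> complex option" where
  "sq = map_option (\<lambda>x. x ^ 2)"

lemma sq_iter: "(sq ^^ k) (Some x) = Some (x ^ (2 ^ k))"
  by (induction k) (simp_all add: sq_def power_mult[symmetric] mult.commute)

lemma sq_inv: "sq z = inv_s (sq (inv_s z))"
  by (cases z) (auto simp: sq_def inv_s_def power_one_over)

lemma chordal_le_2: "chordal (Some u) (Some v) \<le> 2 * cmod (u - v)"
proof (rule power2_le_imp_le)
  have D: "(1 + (cmod u)^2) * (1 + (cmod v)^2) \<ge> 1"
    using mult_mono[of 1 "1 + (cmod u)^2" 1 "1 + (cmod v)^2"] by simp
  have "(chordal (Some u) (Some v))^2 = 4 * (cmod (u - v))^2 / ((1 + (cmod u)^2) * (1 + (cmod v)^2))"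
    by (rule chordal_sq_SS)
  also have "\<dots> \<le> 4 * (cmod (u - v))^2"
    using D by (simp add: divide_le_eq mult_le_cancel_left1)
  also have "\<dots> = (2 * cmod (u - v))^2" by (simp add: power_mult_distrib)
  finally show "(chordal (Some u) (Some v))^2 \<le> (2 * cmod (u - v))^2" .
qed simp

lemma aux_div: "(p::real) \<noteq> 0 \<Longrightarrow> a / (p * q) * (p * r) = a * r / q"
  by (cases "q = 0") (simp_all add: field_simps)

lemma chordal_ball_euclid:
  assumes eps: "\<epsilon> > 0"
  shows "\<exists>r>0. \<forall>w. chordal (Some x0) w < r \<longrightarrow> (\<exists>y. w = Some y \<and> cmod (y - x0) < \<epsilon>)"
proof -
  define c where "c = cmod x0"
  define A where "A = 1 / (1 + c^2)"
  define B where "B = \<epsilon>^2 / ((1 + c^2) * (1 + (2*c+1)^2))"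
  define r where "r = min 1 (min A B)"
  have c0: "c \<ge> 0" unfolding c_def by simp
  have Apos: "A > 0" unfolding A_def by (simp add: add_pos_nonneg)
  have Bpos: "B > 0" unfolding B_def using eps by (simp add: add_pos_nonneg)
  have rpos: "r > 0" unfolding r_def using Apos Bpos by simp
  have r1: "r \<le> 1" unfolding r_def by simp
  have r2: "r^2 \<le> r" using rpos r1 by (simp add: power2_eq_square mult_le_cancel_left1)
  have "r \<le> A" "r \<le> B" unfolding r_def by auto
  then have rA: "r^2 \<le> A" and rB: "r^2 \<le> B" using r2 by auto
  show ?thesis
  proof (intro exI[of _ r] conjI allI impI)
    show "r > 0" by (rule rpos)
    fix w assume w: "chordal (Some x0) w < r"
    then have w2: "(chordal (Some x0) w)^2 < r^2"
      using chordal_nonneg by (simp add: power_strict_mono)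
    show "\<exists>y. w = Some y \<and> cmod (y - x0) < \<epsilon>"
    proof (cases w)
      case None
      then have "(chordal (Some x0) w)^2 = 4 * A" unfolding A_def c_def by (simp add: chordal_sq_SN)
      then show ?thesis using w2 rA Apos by linarith
    next
      case (Some y)
      define Y where "Y = (cmod y)^2"
      have cw: "(chordal (Some x0) w)^2 = 4 * (cmod (y - x0))^2 / ((1 + c^2) * (1 + Y))"
        unfolding Some Y_def c_def by (simp add: chordal_sq_SS norm_minus_commute)
      have Y0: "1 + Y > 0" "1 + c^2 > 0" unfolding Y_def by (simp_all add: add_pos_nonneg)
      have ylt: "cmod y < 2 * c + 1"
      proof (rule ccontr)
        assume "\<not> cmod y < 2 * c + 1"
        then have yb: "cmod y \<ge> 2 * c + 1" by simp
        have "cmod (y - x0) \<ge> cmod y - c" unfolding c_def by (metis norm_triangle_ineq2)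
        then have "2 * cmod (y - x0) \<ge> cmod y + 1" using yb by linarith
        then have "(2 * cmod (y - x0))^2 \<ge> (cmod y + 1)^2" using c0 by (intro power_mono) auto
        moreover have "(cmod y + 1)^2 \<ge> 1 + Y" unfolding Y_def by (simp add: power2_sum)
        ultimately have big: "4 * (cmod (y - x0))^2 \<ge> 1 + Y" by (simp add: power_mult_distrib)
        have "A = (1 + Y) / ((1 + c^2) * (1 + Y))" unfolding A_def using Y0 by simp
        also have "\<dots> \<le> 4 * (cmod (y - x0))^2 / ((1 + c^2) * (1 + Y))"
          using big Y0 by (intro divide_right_mono) auto
        finally show False using cw w2 rA by linarith
      qed
      have Dpos: "(1 + c^2) * (1 + Y) > 0" using Y0 by simp
      have M: "1 + (2*c+1)^2 > 0" by (simp add: add_pos_nonneg)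
      have "4 * (cmod (y - x0))^2 = (chordal (Some x0) w)^2 * ((1 + c^2) * (1 + Y))"
        using Y0 by (simp add: cw)
      also have "\<dots> \<le> B * ((1 + c^2) * (1 + Y))"
        using w2 rB Y0 by (intro mult_right_mono) auto
      also have "\<dots> = \<epsilon>^2 * (1 + Y) / (1 + (2*c+1)^2)" unfolding B_def using Y0 by (simp add: aux_div)
      also have "\<dots> < \<epsilon>^2 * 4"
      proof -
        have "Y < (2*c+1)^2" unfolding Y_def using ylt by (simp add: power_strict_mono)
        then have "(1 + Y) / (1 + (2*c+1)^2) < 1" by (simp add: add_pos_nonneg)
        then have "\<epsilon>^2 * ((1 + Y) / (1 + (2*c+1)^2)) < \<epsilon>^2 * 1" using eps by (intro mult_strict_left_mono) auto
        then have "\<epsilon>^2 * (1 + Y) / (1 + (2*c+1)^2) < \<epsilon>^2" by simp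
        moreover have "\<epsilon>^2 > 0" using eps by simp
        ultimately show ?thesis by linarith
      qed
      finally have "(cmod (y - x0))^2 < \<epsilon>^2" by simp
      then have "cmod (y - x0) < \<epsilon>" using eps by (simp add: power_less_imp_less_base)
      then show ?thesis using Some by blast
    qed
  qed
qed

lemma sq_iter_small:
  assumes "cmod y \<le> \<rho>" "\<rho> < 1" "\<rho>^K < e / 2" "k \<ge> K"
  shows "chordal ((sq ^^ k) (Some y)) (Some 0) < e"
proof -
  have r0: "\<rho> \<ge> 0" using assms(1) norm_ge_zero order_trans by blast
  have "chordal ((sq ^^ k) (Some y)) (Some 0) \<le> 2 * cmod (y ^ (2 ^ k) - 0)"
    unfolding sq_iter by (rule chordal_le_2)
  also have "cmod (y ^ (2 ^ k) - 0) = (cmod y) ^ (2 ^ k)" by (simp add: norm_power)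
  also have "\<dots> \<le> \<rho> ^ (2 ^ k)" using assms(1) by (simp add: power_mono)
  also have "\<dots> \<le> \<rho> ^ K"
  proof (rule power_decreasing)
    show "K \<le> 2 ^ k" using assms(4) less_exp[of k] by linarith
  qed (use r0 assms(2) in auto)
  finally show ?thesis using assms(3) by linarith
qed

lemma sq_normal_inside:
  assumes "cmod x0 < 1"
  shows "normal_at sq (Some x0)"
proof -
  define \<rho> where "\<rho> = (1 + cmod x0) / 2"
  have rho1: "\<rho> < 1" using assms unfolding \<rho>_def by simp
  obtain r where r: "r > 0" and R: "\<forall>w. chordal (Some x0) w < r \<longrightarrow> (\<exists>y. w = Some y \<and> cmod (y - x0) < (1 - cmod x0) / 2)"
    using chordal_ball_euclid[of "(1 - cmod x0) / 2" x0] assms by auto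
  show ?thesis
  proof (rule normal_crit[OF r, where g = "\<lambda>_. Some 0"])
    fix e :: real assume e: "e > 0"
    obtain K where K: "\<rho>^K < e / 2" using real_arch_pow_inv[of "e/2" \<rho>] e rho1 by auto
    show "\<exists>K. \<forall>k\<ge>K. \<forall>w. chordal (Some x0) w < r \<longrightarrow> chordal ((sq ^^ k) w) (Some 0) < e"
    proof (intro exI[of _ K] allI impI)
      fix k w assume k: "k \<ge> K" and w: "chordal (Some x0) w < r"
      then obtain y where y: "w = Some y" "cmod (y - x0) < (1 - cmod x0) / 2" using R by blast
      have "cmod y \<le> cmod x0 + cmod (y - x0)" by (metis add.commute diff_add_cancel norm_triangle_ineq)
      moreover have "2 * cmod (y - x0) < 1 - cmod x0" using y(2) by simp
      ultimately have "2 * cmod y \<le> 1 + cmod x0" by linarith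
      then have "cmod y \<le> \<rho>" unfolding \<rho>_def by simp
      then show "chordal ((sq ^^ k) w) (Some 0) < e" unfolding y(1)
        using sq_iter_small[OF _ rho1 K k] by blast
    qed
  qed
qed

lemma sq_normal_outside:
  assumes "z = None \<or> (\<exists>x. z = Some x \<and> cmod x > 1)"
  shows "normal_at sq z"
proof (rule conj_normal[OF clip_inv_s clip_inv_s inv_s_inv inv_s_inv])
  show "\<And>z. sq z = inv_s (sq (inv_s z))" by (rule sq_inv)
  show "normal_at sq (inv_s z)"
  proof (rule sq_normal_inside[of "case inv_s z of Some u \<Rightarrow> u", THEN back_subst[of "normal_at sq"]])
    show "cmod (case inv_s z of Some u \<Rightarrow> u) < 1" "Some (case inv_s z of Some u \<Rightarrow> u) = inv_s z"
      using assms by (auto simp: inv_s_def norm_divide divide_less_eq)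
  qed
qed

lemma sq_not_normal:
  assumes x0: "cmod x0 = 1"
  shows "\<not> normal_at sq (Some x0)"
proof
  assume "normal_at sq (Some x0)"
  then obtain r where r: "r > 0" and H: "\<forall>k :: nat \<Rightarrow> nat. \<exists>s g. strict_mono s \<and>
      (\<forall>e>0. \<exists>N::nat. \<forall>j\<ge>N. \<forall>w. chordal (Some x0) w < r \<longrightarrow> chordal ((sq ^^ k (s j)) w) (g w) < e)"
    unfolding normal_at_def by blast
  obtain s g where s: "strict_mono s" and G: "\<forall>e>0. \<exists>N::nat. \<forall>j\<ge>N. \<forall>w. chordal (Some x0) w < r \<longrightarrow> chordal ((sq ^^ (s j)) w) (g w) < e"
    using spec[OF H, of id] by auto
  obtain N where N: "\<forall>j\<ge>N. \<forall>w. chordal (Some x0) w < r \<longrightarrow> chordal ((sq ^^ (s j)) w) (g w) < 1/5"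
    using G[rule_format, of "1/5"] by auto
  define P :: nat where "P = 2 ^ (s N)"
  have P1: "P \<ge> 1" unfolding P_def by simp
  define \<delta> where "\<delta> = min (1/2) (min (r/4) (1 / (20 * real P)))"
  have d0: "\<delta> > 0" unfolding \<delta>_def using r P1 by simp
  have d1: "\<delta> \<le> 1/2" "\<delta> \<le> r/4" "\<delta> \<le> 1 / (20 * real P)" unfolding \<delta>_def by auto
  define t where "t = 1 - \<delta>"
  have t0: "0 < t" "t < 1" "0 \<le> t" using d0 d1 unfolding t_def by auto
  define y where "y = complex_of_real t * x0"
  have ny: "cmod y = t" unfolding y_def using x0 t0 by (simp add: norm_mult)
  have "chordal (Some x0) (Some y) \<le> 2 * cmod (x0 - y)" by (rule chordal_le_2)
  also have "x0 - y = complex_of_real \<delta> * x0" unfolding y_def t_def by (simp add: algebra_simps)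
  also have "2 * cmod (complex_of_real \<delta> * x0) = 2 * \<delta>" using x0 d0 by (simp add: norm_mult)
  finally have yr: "chordal (Some x0) (Some y) < r" using d1 r by linarith
  have "chordal ((sq ^^ s N) (Some y)) ((sq ^^ s N) (Some x0)) \<le> 2 * cmod (y ^ P - x0 ^ P)"
    unfolding sq_iter P_def by (rule chordal_le_2)
  also have "y ^ P - x0 ^ P = complex_of_real (t ^ P - 1) * x0 ^ P" unfolding y_def
    by (simp add: power_mult_distrib algebra_simps)
  also have "cmod (complex_of_real (t ^ P - 1) * x0 ^ P) = \<bar>t ^ P - 1\<bar>"
    using x0 by (simp only: norm_mult norm_power norm_of_real) simp
  also have "\<bar>t ^ P - 1\<bar> = 1 - t ^ P" using t0 by (simp add: power_le_one)
  also have "1 - t ^ P \<le> real P * \<delta>"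
    using Bernoulli_inequality[of "- \<delta>" P] d1 unfolding t_def by simp
  finally have cN: "chordal ((sq ^^ s N) (Some y)) ((sq ^^ s N) (Some x0)) \<le> 2 * (real P * \<delta>)" by simp
  have "real P * \<delta> \<le> real P * (1 / (20 * real P))" using d1 by (intro mult_left_mono) auto
  also have "\<dots> = 1/20" using P1 by simp
  finally have cN': "chordal ((sq ^^ s N) (Some y)) ((sq ^^ s N) (Some x0)) \<le> 1/10" using cN by linarith
  obtain J0 where J0: "t ^ J0 < (1/5) / 2" using real_arch_pow_inv[of "(1/5)/2" t] t0 by auto
  define J where "J = max N J0"
  have sJ: "s J \<ge> J0" using seq_suble[OF s, of J] unfolding J_def by linarith
  have late: "chordal ((sq ^^ s J) (Some y)) (Some 0) < 1/5"
    by (rule sq_iter_small[OF _ t0(2) J0 sJ]) (simp add: ny)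
  have gJ: "chordal ((sq ^^ s J) (Some y)) (g (Some y)) < 1/5" using N yr unfolding J_def by auto
  have gN: "chordal ((sq ^^ s N) (Some y)) (g (Some y)) < 1/5" using N yr by auto
  \<comment> \<open>the orbit of x0 stays on the unit circle\<close>
  have "(chordal (Some 0) ((sq ^^ s N) (Some x0)))^2 = 2"
    unfolding sq_iter using x0 by (simp add: chordal_sq_SS norm_power)
  then have big: "chordal (Some 0) ((sq ^^ s N) (Some x0)) \<ge> 1"
    using chordal_nonneg by (metis one_le_numeral power2_le_imp_le power_one)
  have "chordal (Some 0) ((sq ^^ s N) (Some x0)) \<le>
        chordal (Some 0) ((sq ^^ s J) (Some y)) + chordal ((sq ^^ s J) (Some y)) ((sq ^^ s N) (Some x0))"
    by (rule chordal_triangle)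
  also have "chordal ((sq ^^ s J) (Some y)) ((sq ^^ s N) (Some x0)) \<le>
        chordal ((sq ^^ s J) (Some y)) (g (Some y)) + chordal (g (Some y)) ((sq ^^ s N) (Some x0))"
    by (rule chordal_triangle)
  also have "chordal (g (Some y)) ((sq ^^ s N) (Some x0)) \<le>
        chordal (g (Some y)) ((sq ^^ s N) (Some y)) + chordal ((sq ^^ s N) (Some y)) ((sq ^^ s N) (Some x0))"
    by (rule chordal_triangle)
  finally have "chordal (Some 0) ((sq ^^ s N) (Some x0)) < 1"
    using late gJ gN cN' chordal_sym[of "Some 0" "(sq ^^ s J) (Some y)"] chordal_sym[of "g (Some y)" "(sq ^^ s N) (Some y)"]
    by linarith
  then show False using big by linarith
qed

lemma sq_normal_iff: "normal_at sq z \<longleftrightarrow> z \<notin> Some ` {y. cmod y = 1}"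
proof (cases z)
  case None
  then show ?thesis using sq_normal_outside by auto
next
  case (Some x)
  show ?thesis
  proof (cases "cmod x < 1")
    case True then show ?thesis using sq_normal_inside Some by auto
  next
    case False
    show ?thesis
    proof (cases "cmod x = 1")
      case True then show ?thesis using sq_not_normal Some by auto
    next
      case False
      then have "cmod x > 1" using \<open>\<not> cmod x < 1\<close> by linarith
      then show ?thesis using sq_normal_outside Some False by auto
    qed
  qed
qed

lemma smult_eq_mult: "smult c p = [:c:] * p" by simp

definition qpol :: "complex \<Rightarrow> complex \<Rightarrow> nat \<Rightarrow> nat \<Rightarrow> complex poly" where
  "qpol a b m n = [: of_nat m * b^2 + of_nat n * a^2, -2 * (of_nat m * b + of_nat n * a), of_nat m + of_nat n :]"

definition ppol :: "complex \<Rightarrow> complex \<Rightarrow> nat \<Rightarrow> nat \<Rightarrow> complex poly" where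
  "ppol a b m n = [: a * b * (of_nat m * b + of_nat n * a), -2 * a * b * (of_nat m + of_nat n), a * of_nat m + b * of_nat n :]"

lemma poly_qpol: "poly (qpol a b m n) x = of_nat m * (x - b)^2 + of_nat n * (x - a)^2"
  by (simp add: qpol_def algebra_simps power2_eq_square)

lemma poly_ppol: "poly (ppol a b m n) x = a * poly (qpol a b m n) x + of_nat n * (b - a) * (x - a)^2"
  by (simp add: ppol_def qpol_def algebra_simps power2_eq_square)

lemma poly_ppol_b: "poly (ppol a b m n) x = b * poly (qpol a b m n) x + of_nat m * (a - b) * (x - b)^2"
  by (simp add: ppol_def qpol_def algebra_simps power2_eq_square)

lemma pderiv_lin[simp]: "pderiv [:c, 1:] = 1"
  by (simp add: pderiv_pCons)

lemma lin_pderiv_pow: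
  assumes "m \<ge> 1"
  shows "[:-a, 1:] * pderiv ([:-a, 1:] ^ m) = [:of_nat m:] * [:-a, 1:] ^ m"
proof -
  obtain k where k: "m = Suc k" using assms by (cases m) auto
  have "[:-a, 1:] * pderiv ([:-a, 1:] ^ Suc k) = smult (of_nat (Suc k)) ([:-a, 1:] ^ Suc k)"
    by (simp only: pderiv_power_Suc pderiv_lin mult_1_right mult_smult_right) (simp only: power_Suc)
  then show ?thesis unfolding k by simp
qed

lemma qe:
  fixes A B f f' f'' L C :: "'a::comm_ring_1"
  assumes E1: "A * B * f' = f * L" and E2: "A * B * f'' + f' * (A + B) = f * C + L * f'"
  shows "(A * B)^2 * (f'^2 - f * f'') = f^2 * (L * (A + B) - C * (A * B))"
proof -
  have e2: "A * B * f'' = f * C + L * f' - f' * (A + B)" using E2 by (simp add: algebra_simps)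
  have "(A * B)^2 * (f'^2 - f * f'') = (A * B * f')^2 - f * (A * B) * (A * B * f'')"
    by (simp add: algebra_simps power2_eq_square)
  also have "\<dots> = (f * L)^2 - f * (A * B) * (f * C + L * f' - f' * (A + B))"
    by (simp only: e2 E1)
  also have "\<dots> = (f * L)^2 - f * (f * C * (A * B) + L * (A * B * f') - (A + B) * (A * B * f'))"
    by (simp add: algebra_simps)
  also have "\<dots> = (f * L)^2 - f * (f * C * (A * B) + L * (f * L) - (A + B) * (f * L))"
    by (simp only: E1)
  also have "\<dots> = f^2 * (L * (A + B) - C * (A * B))"
    by (simp add: algebra_simps power2_eq_square)
  finally show ?thesis .
qed
lemma pe:
  fixes A B f f' X Q L q p h :: "'a::comm_ring_1"
  assumes E1: "A * B * f' = f * L" and Qe: "(A * B)^2 * Q = f^2 * q"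
  shows "(A * B)^2 * (X * Q - f * f') = f^2 * (X * q - A * B * L)"
proof -
  have "(A * B)^2 * (X * Q - f * f') = X * ((A * B)^2 * Q) - f * (A * B) * (A * B * f')"
    by (simp add: algebra_simps power2_eq_square)
  also have "\<dots> = f^2 * (X * q - A * B * L)" unfolding Qe E1 by (simp add: algebra_simps power2_eq_square)
  finally show ?thesis .
qed
lemma e1:
  fixes A B Am Bn dAm dBn :: "'a::comm_ring_1"
  shows "A * B * (Am * dBn + Bn * dAm) = Am * (B * dBn) * A + Bn * (A * dAm) * B"
  by (simp add: algebra_simps)
lemma e1b:
  fixes A B Am Bn cm cn :: "'a::comm_ring_1"
  shows "Am * (cn * Bn) * A + Bn * (cm * Am) * B = Am * Bn * (cm * B + cn * A)"
  by (simp add: algebra_simps)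
lemma schroeder_PQ:
  fixes a b :: complex and m n :: nat
  assumes m1: "m \<ge> 1" and n1: "n \<ge> 1"
  defines "A \<equiv> [:-a, 1:]" and "B \<equiv> [:-b, 1:]"
  defines "f \<equiv> A ^ m * B ^ n"
  defines "Q \<equiv> (pderiv f)^2 - f * pderiv (pderiv f)"
  defines "P \<equiv> [:0, 1:] * Q - f * pderiv f"
  defines "h \<equiv> A ^ (2*m-2) * B ^ (2*n-2)"
  shows "Q = h * qpol a b m n" "P = h * ppol a b m n"
proof -
  define L where "L = [:of_nat m:] * B + [:of_nat n:] * A"
  define f' where "f' = pderiv f"
  define f'' where "f'' = pderiv f'"
  have pA: "A * pderiv (A ^ m) = [:of_nat m:] * A ^ m" unfolding A_def by (rule lin_pderiv_pow[OF m1])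
  have pB: "B * pderiv (B ^ n) = [:of_nat n:] * B ^ n" unfolding B_def by (rule lin_pderiv_pow[OF n1])
  have E1: "A * B * f' = f * L"
  proof -
    have "A * B * f' = A ^ m * (B * pderiv (B ^ n)) * A + B ^ n * (A * pderiv (A ^ m)) * B"
      unfolding f'_def f_def pderiv_mult by (rule e1)
    also have "\<dots> = f * L" unfolding pA pB f_def L_def by (rule e1b)
    finally show ?thesis .
  qed
  have dA: "pderiv A = 1" "pderiv B = 1" unfolding A_def B_def by simp_all
  have dL: "pderiv L = [:of_nat m + of_nat n:]"
    unfolding L_def pderiv_add pderiv_mult dA pderiv_pCons by simp
  have D: "pderiv (A * B * f') = pderiv (f * L)" using E1 by simp
  then have "A * B * f'' + f' * (A * 1 + B * 1) = f * [:of_nat m + of_nat n:] + L * f'"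
    unfolding pderiv_mult dA dL f''_def[symmetric] f'_def[symmetric] .
  then have E2: "A * B * f'' + f' * (A + B) = f * [:of_nat m + of_nat n:] + L * f'"
    by (simp only: mult_1_right)
  have idq: "L * (A + B) - [:of_nat m + of_nat n:] * (A * B) = qpol a b m n"
    by (rule poly_eq_poly_eq_iff[THEN iffD1], rule ext)
       (simp add: L_def A_def B_def poly_qpol algebra_simps power2_eq_square)
  have idp: "[:0, 1:] * qpol a b m n - A * B * L = ppol a b m n"
    by (rule poly_eq_poly_eq_iff[THEN iffD1], rule ext)
       (simp add: L_def A_def B_def poly_ppol poly_qpol algebra_simps power2_eq_square)
  have fsq: "f^2 = (A * B)^2 * h"
  proof -
    have "f^2 = A ^ (2*m) * B ^ (2*n)" unfolding f_def by (simp add: power_mult_distrib power_mult[symmetric] mult.commute)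
    also have "A ^ (2*m) = A^2 * A ^ (2*m-2)"
    proof -
      have "2*m = 2 + (2*m-2)" using m1 by simp
      then show ?thesis by (metis power_add)
    qed
    also have "B ^ (2*n) = B^2 * B ^ (2*n-2)"
    proof -
      have "2*n = 2 + (2*n-2)" using n1 by simp
      then show ?thesis by (metis power_add)
    qed
    finally show ?thesis unfolding h_def by (simp add: power_mult_distrib algebra_simps)
  qed
  have Qe: "(A * B)^2 * Q = f^2 * (L * (A + B) - [:of_nat m + of_nat n:] * (A * B))"
    unfolding Q_def f'_def[symmetric] f''_def[symmetric] by (rule qe[OF E1 E2])
  have ABnz: "(A * B)^2 \<noteq> 0" unfolding A_def B_def by simp
  have "(A * B)^2 * Q = (A * B)^2 * (h * qpol a b m n)"
    using Qe unfolding idq fsq by (simp only: mult_ac)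
  then show Qh: "Q = h * qpol a b m n" using ABnz by simp
  have "(A * B)^2 * P = f^2 * ([:0, 1:] * qpol a b m n - A * B * L)"
    unfolding P_def f'_def[symmetric] by (rule pe[OF E1 Qe[unfolded idq]])
  also have "\<dots> = (A * B)^2 * (h * ppol a b m n)" unfolding idp fsq by (simp only: mult_ac)
  finally show "P = h * ppol a b m n" using ABnz by simp
qed

lemma coprime_pq:
  assumes ab: "a \<noteq> b" and m1: "m \<ge> 1" and n1: "n \<ge> 1"
  shows "coprime (ppol a b m n) (qpol a b m n)"
proof (rule coprimeI)
  fix d assume d1: "d dvd ppol a b m n" and d2: "d dvd qpol a b m n"
  define A where "A = [:-a, 1:]"
  have id: "ppol a b m n - smult a (qpol a b m n) = smult (of_nat n * (b - a)) (A^2)"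
    by (rule poly_eq_poly_eq_iff[THEN iffD1], rule ext)
       (simp add: A_def poly_ppol algebra_simps power2_eq_square)
  have "d dvd ppol a b m n - smult a (qpol a b m n)" using d1 d2 by (simp add: dvd_diff dvd_smult)
  then have "d dvd smult (of_nat n * (b - a)) (A^2)" unfolding id .
  then have dA: "d dvd A^2" using ab n1 by (auto dest: dvd_smult_cancel)
  have pA: "prime_elem A" unfolding A_def by (rule prime_elem_linear_field_poly) simp
  have "poly (qpol a b m n) a \<noteq> 0" using ab m1 by (simp add: poly_qpol)
  then have "\<not> A dvd qpol a b m n" unfolding A_def by (simp add: poly_eq_0_iff_dvd)
  then have "coprime A (qpol a b m n)" by (rule prime_elem_imp_coprime[OF pA])
  then have "coprime (A^2) (qpol a b m n)" by simp
  then show "is_unit d" using dA d2 by (rule coprime_common_divisor)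
qed

lemma normalize_monic: "lead_coeff (h :: complex poly) = 1 \<Longrightarrow> normalize h = h"
  by (metis mult_1 unit_factor_mult_normalize unit_factor_poly_def unit_factor_1 one_pCons)

lemma rational_map_hpq:
  assumes "lead_coeff h = 1" "coprime p q"
  shows "rational_map (h * p) (h * (q :: complex poly)) = rat_eval p q"
proof -
  have h0: "h \<noteq> 0" using assms(1) by auto
  have "gcd (h * p) (h * q) = h"
    using assms by (simp add: gcd_mult_left normalize_monic)
  then show ?thesis unfolding rational_map_def Let_def using h0 by simp
qed

lemma rat_eval_None:
  assumes "m + n > 0"
  shows "rat_eval (ppol a b m n) (qpol a b m n) None = Some ((a * of_nat m + b * of_nat n) / (of_nat m + of_nat n))"
proof -
  have mn: "(of_nat m + of_nat n :: complex) \<noteq> 0" using assms by (metis of_nat_add of_nat_eq_0_iff not_gr0)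
  have dq: "degree (qpol a b m n) = 2" "lead_coeff (qpol a b m n) = of_nat m + of_nat n"
    using mn by (simp_all add: qpol_def)
  show ?thesis
  proof (cases "a * of_nat m + b * of_nat n = 0")
    case True
    have "degree (ppol a b m n) \<le> 1" unfolding ppol_def using True by simp
    then show ?thesis using True dq unfolding rat_eval_def by simp
  next
    case False
    have "degree (ppol a b m n) = 2" "lead_coeff (ppol a b m n) = a * of_nat m + b * of_nat n"
      using False by (simp_all add: ppol_def)
    then show ?thesis using dq unfolding rat_eval_def by simp
  qed
qed

definition trm :: "complex \<Rightarrow> complex option \<Rightarrow> complex option" where
  "trm t = map_option (\<lambda>x. x + t)"
definition scm :: "complex \<Rightarrow> complex option \<Rightarrow> complex option" where
  "scm c = map_option (\<lambda>x. c * x)"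

lemma trm_simps[simp]: "trm t (Some x) = Some (x + t)" "trm t None = None"
  by (simp_all add: trm_def)
lemma scm_simps[simp]: "scm c (Some x) = Some (c * x)" "scm c None = None"
  by (simp_all add: scm_def)
lemma trm_inv[simp]: "trm (- t) (trm t z) = z" "trm t (trm (- t) z) = z"
  by (cases z; simp)+
lemma scm_inv[simp]: "c \<noteq> 0 \<Longrightarrow> scm (1 / c) (scm c z) = z" "c \<noteq> 0 \<Longrightarrow> scm c (scm (1 / c) z) = z"
  by (cases z; simp)+
lemma clip_trm: "clip (trm t)" unfolding trm_def by (rule clip_tr)
lemma clip_scm: "c \<noteq> 0 \<Longrightarrow> clip (scm c)" unfolding scm_def by (rule clip_sc)

definition lamc :: "nat \<Rightarrow> nat \<Rightarrow> complex" where
  "lamc m n = - of_nat n / of_nat m"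

definition phi :: "complex \<Rightarrow> complex \<Rightarrow> complex \<Rightarrow> complex option \<Rightarrow> complex option" where
  "phi a b l = trm l \<circ> scm (l * (b - a)) \<circ> inv_s \<circ> trm (- b)"

definition psi :: "complex \<Rightarrow> complex \<Rightarrow> complex \<Rightarrow> complex option \<Rightarrow> complex option" where
  "psi a b l = trm b \<circ> inv_s \<circ> scm (1 / (l * (b - a))) \<circ> trm (- l)"

context
  fixes a b l :: complex
  assumes ab: "a \<noteq> b" and l0: "l \<noteq> 0"
begin

lemma c0: "l * (b - a) \<noteq> 0" using ab l0 by simp

lemma psi_phi: "psi a b l (phi a b l z) = z"
  unfolding phi_def psi_def using c0 by simp

lemma phi_psi: "phi a b l (psi a b l z) = z"
  unfolding phi_def psi_def using c0 by simp

lemma clip_phi: "clip (phi a b l)"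
  unfolding phi_def using c0 by (intro clip_comp clip_trm clip_scm clip_inv_s)

lemma clip_psi: "clip (psi a b l)"
  unfolding psi_def using c0 by (intro clip_comp clip_trm clip_scm clip_inv_s) simp

lemma phi_None: "phi a b l None = Some l"
  unfolding phi_def by (simp add: inv_s_def)

lemma phi_Some: "phi a b l (Some x) = (if x = b then None else Some (l * (x - a) / (x - b)))"
  unfolding phi_def using ab by (auto simp: inv_s_def field_simps)

end

lemma conj_eq:
  fixes a b :: complex and m n :: nat
  assumes ab: "a \<noteq> b" and m1: "m \<ge> 1" and n1: "n \<ge> 1"
  defines "S \<equiv> rat_eval (ppol a b m n) (qpol a b m n)"
  defines "l \<equiv> lamc m n"
  shows "phi a b l (S z) = sq (phi a b l z)"
proof -
  define M :: complex where "M = of_nat m"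
  define N :: complex where "N = of_nat n"
  have M0: "M \<noteq> 0" and N0: "N \<noteq> 0" using m1 n1 unfolding M_def N_def by auto
  have MN: "M + N \<noteq> 0" unfolding M_def N_def using m1 by (metis of_nat_add of_nat_eq_0_iff add_is_0 not_one_le_zero)
  have l: "l = - N / M" unfolding l_def lamc_def M_def N_def by simp
  have l0: "l \<noteq> 0" using M0 N0 l by simp
  have ab': "a - b \<noteq> 0" "b - a \<noteq> 0" using ab by auto
  have q: "poly (qpol a b m n) x = M * (x - b)^2 + N * (x - a)^2" for x
    unfolding poly_qpol M_def N_def ..
  have pa: "poly (ppol a b m n) x = a * poly (qpol a b m n) x + N * (b - a) * (x - a)^2" for x
    unfolding poly_ppol N_def ..
  have pb: "poly (ppol a b m n) x = b * poly (qpol a b m n) x + M * (a - b) * (x - b)^2" for x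
    unfolding poly_ppol_b M_def ..
  show ?thesis
  proof (cases z)
    case None
    define s0 where "s0 = (a * M + b * N) / (M + N)"
    have S0: "S None = Some s0" unfolding S_def s0_def M_def N_def
      by (rule rat_eval_None) (use m1 in simp)
    have s0b: "s0 - b = M * (a - b) / (M + N)" unfolding s0_def using MN by (simp add: field_simps)
    have s0a: "s0 - a = N * (b - a) / (M + N)" unfolding s0_def using MN by (simp add: field_simps)
    have s0nb: "s0 \<noteq> b" using s0b M0 ab' MN by auto
    have "(s0 - a) / (s0 - b) = (N * (b - a)) / (M * (a - b))" unfolding s0a s0b using MN by simp
    also have "N * (b - a) = (- N) * (a - b)" by (simp add: algebra_simps)
    also have "(- N) * (a - b) / (M * (a - b)) = - N / M" using ab' by simp
    finally have "(s0 - a) / (s0 - b) = l" unfolding l .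
    then have "l * (s0 - a) / (s0 - b) = l^2" by (simp add: power2_eq_square times_divide_eq_right[symmetric] del: times_divide_eq_right)
    then show ?thesis using None S0 s0nb
      by (simp add: phi_Some[OF ab l0] phi_None[OF ab l0] sq_def)
  next
    case (Some x)
    show ?thesis
    proof (cases "x = b")
      case True
      have qb: "poly (qpol a b m n) b \<noteq> 0" unfolding q using N0 ab' by simp
      have "S (Some b) = Some b" unfolding S_def rat_eval_def using qb pb[of b] by simp
      then show ?thesis using Some True by (simp add: phi_Some[OF ab l0] sq_def)
    next
      case False
      have xb: "x - b \<noteq> 0" using False by simp
      show ?thesis
      proof (cases "poly (qpol a b m n) x = 0")
        case True
        have SN: "S (Some x) = None" unfolding S_def rat_eval_def using True by simp
        have e: "M * (x - b)^2 = - N * (x - a)^2" using True unfolding q by (simp add: eq_neg_iff_add_eq_0)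
        have "(l * (x - a) / (x - b))^2 = l * (l * (x - a)^2 / (x - b)^2)"
          by (simp add: power2_eq_square field_simps)
        also have "l * (x - a)^2 = - N * (x - a)^2 / M" unfolding l by simp
        also have "\<dots> = M * (x - b)^2 / M" unfolding e ..
        also have "\<dots> / (x - b)^2 = 1" using M0 xb by simp
        finally have "(l * (x - a) / (x - b))^2 = l" by simp
        then show ?thesis using Some False SN by (simp add: phi_Some[OF ab l0] phi_None[OF ab l0] sq_def)
      next
        case qx: False
        define s where "s = poly (ppol a b m n) x / poly (qpol a b m n) x"
        have SS: "S (Some x) = Some s" unfolding S_def rat_eval_def s_def using qx by simp
        have sb: "s - b = M * (a - b) * (x - b)^2 / poly (qpol a b m n) x"
          unfolding s_def pb using qx by (simp add: field_simps)
        have sa: "s - a = N * (b - a) * (x - a)^2 / poly (qpol a b m n) x"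
          unfolding s_def pa using qx by (simp add: field_simps)
        have snb: "s \<noteq> b" using sb M0 ab' xb qx by auto
        have "l * (s - a) / (s - b) = l * (N * (b - a) * (x - a)^2) / (M * (a - b) * (x - b)^2)"
          unfolding sa sb using qx by (simp add: field_simps)
        also have "\<dots> = (l^2 * (x - a)^2) / ((x - b)^2)"
        proof -
          have hN: "N = - (l * M)" unfolding l using M0 by simp
          have d1: "M * (a - b) * (x - b)^2 \<noteq> 0" using M0 ab' xb by simp
          have d2: "(x - b)^2 \<noteq> 0" using xb by simp
          show ?thesis unfolding frac_eq_eq[OF d1 d2] hN by (simp add: algebra_simps power2_eq_square)
        qed
        also have "\<dots> = (l * (x - a) / (x - b))^2" by (simp add: power_divide power_mult_distrib)
        finally show ?thesis using Some False SS snb by (simp add: phi_Some[OF ab l0] sq_def)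
      qed
    qed
  qed
qed

lemma julia_S:
  fixes a b :: complex and m n :: nat
  assumes ab: "a \<noteq> b" and m1: "m \<ge> 1" and n1: "n \<ge> 1"
  shows "julia_set (rat_eval (ppol a b m n) (qpol a b m n)) = {z. phi a b (lamc m n) z \<notin> - (Some ` {y. cmod y = 1})}"
proof -
  define S where "S = rat_eval (ppol a b m n) (qpol a b m n)"
  define l where "l = lamc m n"
  have l0: "l \<noteq> 0" unfolding l_def lamc_def using m1 n1 by simp
  have CE: "phi a b l (S z) = sq (phi a b l z)" for z
    unfolding S_def l_def by (rule conj_eq[OF ab m1 n1])
  have SE: "S z = psi a b l (sq (phi a b l z))" for z
    using CE[of z] psi_phi[OF ab l0, of "S z"] by simp
  have SE': "sq y = phi a b l (S (psi a b l y))" for y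
    using CE[of "psi a b l y"] phi_psi[OF ab l0, of y] by simp
  have N: "normal_at S z \<longleftrightarrow> normal_at sq (phi a b l z)" for z
  proof
    assume "normal_at sq (phi a b l z)"
    then show "normal_at S z"
      by (rule conj_normal[where \<phi>="phi a b l" and \<psi>="psi a b l" and S=S and T=sq, OF clip_phi[OF ab l0] clip_psi[OF ab l0] psi_phi[OF ab l0] phi_psi[OF ab l0] SE])
  next
    assume "normal_at S z"
    then have "normal_at S (psi a b l (phi a b l z))" using psi_phi[OF ab l0] by simp
    then show "normal_at sq (phi a b l z)"
      by (rule conj_normal[where \<phi>="psi a b l" and \<psi>="phi a b l" and S=sq and T=S, OF clip_psi[OF ab l0] clip_phi[OF ab l0] phi_psi[OF ab l0] psi_phi[OF ab l0] SE'])
  qed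
  show ?thesis unfolding julia_set_def S_def[symmetric] l_def[symmetric] using N sq_normal_iff by auto
qed

lemma phi_U:
  assumes ab: "a \<noteq> b" and l0: "l \<noteq> 0"
  shows "phi a b l (Some x) \<in> Some ` {y. cmod y = 1} \<longleftrightarrow> cmod l * cmod (x - a) = cmod (x - b)"
        "phi a b l None \<in> Some ` {y. cmod y = 1} \<longleftrightarrow> cmod l = 1"
proof -
  show "phi a b l None \<in> Some ` {y. cmod y = 1} \<longleftrightarrow> cmod l = 1"
    using phi_None[OF ab l0] by auto
  show "phi a b l (Some x) \<in> Some ` {y. cmod y = 1} \<longleftrightarrow> cmod l * cmod (x - a) = cmod (x - b)"
  proof (cases "x = b")
    case True
    then show ?thesis using phi_Some[OF ab l0, of x] ab l0 by auto
  next
    case False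
    then have "cmod (x - b) > 0" by simp
    then show ?thesis using phi_Some[OF ab l0, of x] False
      by (auto simp: norm_divide norm_mult divide_eq_1_iff)
  qed
qed

lemma cmod_lamc: "m \<ge> 1 \<Longrightarrow> cmod (lamc m n) = real n / real m"
  unfolding lamc_def by (simp add: norm_divide)

lemma apol_id:
  fixes x1 x2 a1 a2 b1 b2 mm nn D :: real
  assumes "D = mm^2 - nn^2"
  shows "(D * x1 - (b1 * mm^2 - a1 * nn^2))^2 + (D * x2 - (b2 * mm^2 - a2 * nn^2))^2
           - (mm * nn)^2 * ((a1 - b1)^2 + (a2 - b2)^2)
         = D * (mm^2 * ((x1 - b1)^2 + (x2 - b2)^2) - nn^2 * ((x1 - a1)^2 + (x2 - a2)^2))"
  unfolding assms by (simp add: algebra_simps power2_eq_square)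

lemma apollonius:
  fixes a b x :: complex and m n :: nat
  assumes mn: "m > n"
  shows "real n / real m * cmod (x - a) = cmod (x - b) \<longleftrightarrow>
         cmod (x - (b * of_nat m ^ 2 - a * of_nat n ^ 2) / (of_nat m ^ 2 - of_nat n ^ 2))
           = real m * real n * cmod (a - b) / (real m ^ 2 - real n ^ 2)"
proof -
  define mm where "mm = real m"
  define nn where "nn = real n"
  define D where "D = mm^2 - nn^2"
  have m0: "mm > 0" using mn unfolding mm_def by simp
  have n0: "nn \<ge> 0" unfolding nn_def by simp
  have "nn < mm" using mn unfolding mm_def nn_def by simp
  then have D0: "D > 0" unfolding D_def using n0 by (simp add: power_strict_mono)
  define W where "W = complex_of_real D * x - (b * complex_of_real (mm^2) - a * complex_of_real (nn^2))"
  have Dc: "(of_nat m ^ 2 - of_nat n ^ 2 :: complex) = complex_of_real D" unfolding D_def mm_def nn_def by simp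
  have Wc: "(b * of_nat m ^ 2 - a * of_nat n ^ 2 :: complex) = b * complex_of_real (mm^2) - a * complex_of_real (nn^2)"
    unfolding mm_def nn_def by simp
  have xc: "x - (b * of_nat m ^ 2 - a * of_nat n ^ 2) / (of_nat m ^ 2 - of_nat n ^ 2) = W / complex_of_real D"
    unfolding Dc Wc W_def using D0 by (simp add: field_simps)
  have R: "cmod (x - (b * of_nat m ^ 2 - a * of_nat n ^ 2) / (of_nat m ^ 2 - of_nat n ^ 2)) = cmod W / D"
    unfolding xc using D0 by (simp add: norm_divide)
  have iden: "(cmod W)^2 - (mm * nn)^2 * (cmod (a - b))^2 = D * (mm^2 * (cmod (x - b))^2 - nn^2 * (cmod (x - a))^2)"
    unfolding cmod_sq_re_im W_def using apol_id[OF D_def] by simp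
  have "real n / real m * cmod (x - a) = cmod (x - b) \<longleftrightarrow> nn * cmod (x - a) = mm * cmod (x - b)"
    unfolding mm_def[symmetric] nn_def[symmetric] using m0 by (auto simp: field_simps)
  also have "\<dots> \<longleftrightarrow> (nn * cmod (x - a))^2 = (mm * cmod (x - b))^2"
    using m0 n0 by (auto intro: power2_eq_imp_eq)
  also have "\<dots> \<longleftrightarrow> (cmod W)^2 = (mm * nn * cmod (a - b))^2"
    using iden D0 by (auto simp: power_mult_distrib algebra_simps)
  also have "\<dots> \<longleftrightarrow> cmod W = mm * nn * cmod (a - b)"
    using m0 n0 by (auto intro: power2_eq_imp_eq)
  also have "\<dots> \<longleftrightarrow> cmod W / D = mm * nn * cmod (a - b) / D"
    using D0 by (auto simp: divide_cancel_right)
  finally show ?thesis unfolding R D_def mm_def nn_def .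
qed

theorem theorem2:
  fixes a b :: complex and m n :: nat
  assumes "a \<noteq> b" and "n \<ge> 1" and "m \<ge> n"
  defines "f \<equiv> [:-a, 1:] ^ m * [:-b, 1:] ^ n"
  shows "(m = n \<longrightarrow>
            julia_set (schroeder_map f) = insert None (Some ` {z. cmod (z - a) = cmod (z - b)}))
       \<and> (m > n \<longrightarrow>
            julia_set (schroeder_map f) =
              Some ` {z. cmod (z - (b * of_nat m ^ 2 - a * of_nat n ^ 2) / (of_nat m ^ 2 - of_nat n ^ 2))
                         = real m * real n * cmod (a - b) / (real m ^ 2 - real n ^ 2)})"
proof -
  have ab: "a \<noteq> b" and n1: "n \<ge> 1" using assms by auto
  have m1: "m \<ge> 1" using assms by auto
  define h where "h = [:-a, 1:] ^ (2*m-2) * [:-b, 1:] ^ (2*n-2)"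
  have PQ: "(pderiv f)^2 - f * pderiv (pderiv f) = h * qpol a b m n"
           "[:0, 1:] * ((pderiv f)^2 - f * pderiv (pderiv f)) - f * pderiv f = h * ppol a b m n"
    unfolding f_def h_def by (rule schroeder_PQ[OF m1 n1])+
  have hm: "lead_coeff h = 1" unfolding h_def by (simp add: lead_coeff_mult lead_coeff_power)
  have SM: "schroeder_map f = rat_eval (ppol a b m n) (qpol a b m n)"
    unfolding schroeder_map_def Let_def unfolding PQ(2) unfolding PQ(1)
    by (rule rational_map_hpq[OF hm coprime_pq[OF ab m1 n1]])
  define l where "l = lamc m n"
  have l0: "l \<noteq> 0" unfolding l_def lamc_def using m1 n1 by simp
  have cl: "cmod l = real n / real m" unfolding l_def by (rule cmod_lamc[OF m1])
  have J: "julia_set (schroeder_map f) = {z. phi a b l z \<in> Some ` {y. cmod y = 1}}"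
    unfolding SM julia_S[OF ab m1 n1] l_def by simp
  have memS: "Some x \<in> julia_set (schroeder_map f) \<longleftrightarrow> real n / real m * cmod (x - a) = cmod (x - b)" for x
    unfolding J using phi_U[OF ab l0] cl by simp
  have memN: "None \<in> julia_set (schroeder_map f) \<longleftrightarrow> real n / real m = 1"
    unfolding J using phi_U[OF ab l0] cl by simp
  have setI: "X = Y" if "\<And>x. Some x \<in> X \<longleftrightarrow> Some x \<in> Y" "None \<in> X \<longleftrightarrow> None \<in> Y" for X Y :: "complex option set"
  proof (rule set_eqI)
    fix z show "z \<in> X \<longleftrightarrow> z \<in> Y" using that by (cases z) auto
  qed
  show ?thesis
  proof (intro conjI impI)
    assume mn: "m = n"
    show "julia_set (schroeder_map f) = insert None (Some ` {z. cmod (z - a) = cmod (z - b)})"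
    proof (rule setI)
      show "None \<in> julia_set (schroeder_map f) \<longleftrightarrow> None \<in> insert None (Some ` {z. cmod (z - a) = cmod (z - b)})"
        using memN mn m1 by simp
      fix x show "Some x \<in> julia_set (schroeder_map f) \<longleftrightarrow> Some x \<in> insert None (Some ` {z. cmod (z - a) = cmod (z - b)})"
        using memS[of x] mn m1 by auto
    qed
  next
    assume mn: "m > n"
    show "julia_set (schroeder_map f) = Some ` {z. cmod (z - (b * of_nat m ^ 2 - a * of_nat n ^ 2) / (of_nat m ^ 2 - of_nat n ^ 2))
                         = real m * real n * cmod (a - b) / (real m ^ 2 - real n ^ 2)}"
    proof (rule setI)
      show "None \<in> julia_set (schroeder_map f) \<longleftrightarrow> None \<in> Some ` {z. cmod (z - (b * of_nat m ^ 2 - a * of_nat n ^ 2) / (of_nat m ^ 2 - of_nat n ^ 2))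
                         = real m * real n * cmod (a - b) / (real m ^ 2 - real n ^ 2)}"
        using memN mn by auto
      fix x show "Some x \<in> julia_set (schroeder_map f) \<longleftrightarrow> Some x \<in> Some ` {z. cmod (z - (b * of_nat m ^ 2 - a * of_nat n ^ 2) / (of_nat m ^ 2 - of_nat n ^ 2))
                         = real m * real n * cmod (a - b) / (real m ^ 2 - real n ^ 2)}"
        using memS[of x] apollonius[OF mn, of x a b] by auto
    qed
  qed
qed

end
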